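(* Let $\mathcal{M}=\{1,\dots,m\}$, let $Q=(q_{ij})$ be an $m\times m$ generator matrix ($q_{ij}\ge0$ for $i\ne j$, $q_{ii}=-\sum_{j\ne i}q_{ij}$), let $r>0$, and for $i\in\mathcal{M}$ let $N(i),R(i),c(i),h(i)>0$ and $\theta(i)\in\mathbb{R}$. Then the algebraic Riccati equation $$\frac{\varphi^2(i)}{R(i)}+r\varphi(i)-\sum_{j\in\mathcal{M}}q_{ij}\varphi(j)-N(i)=0,\quad i\in\mathcal{M},$$ has a unique solution $(\varphi(1),\dots,\varphi(m))$ with $\varphi(i)\ge0$ for all $i\in\mathcal{M}$, and for this $\varphi$ the linear system $$\Big(r+\frac{\varphi(i)}{R(i)}\Big)\psi(i)-\sum_{j\in\mathcal{M}}q_{ij}\psi(j)-(h(i)-\theta(i))\varphi(i)+N(i)c(i)=0,\quad i\in\mathcal{M},$$ has a unique solution $(\psi(1),\dots,\psi(m))$. *)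

theory Defs
  imports Main "HOL-Library.FuncSet" Complex_Main
begin

text \<open>Index set M = {1..m}; vectors over M are functions nat => real that are
  extensional on M (value undefined outside M), so that uniqueness is meaningful.\<close>

definition generator_matrix :: "nat \<Rightarrow> (nat \<Rightarrow> nat \<Rightarrow> real) \<Rightarrow> bool" where
  "generator_matrix m q \<longleftrightarrow>
     (\<forall>i\<in>{1..m}. \<forall>j\<in>{1..m}. i \<noteq> j \<longrightarrow> q i j \<ge> 0) \<and>
     (\<forall>i\<in>{1..m}. q i i = - (\<Sum>j\<in>{1..m} - {i}. q i j))"

definition riccati_eq ::
  "nat \<Rightarrow> (nat \<Rightarrow> nat \<Rightarrow> real) \<Rightarrow> real \<Rightarrow> (nat \<Rightarrow> real) \<Rightarrow> (nat \<Rightarrow> real) \<Rightarrow> (nat \<Rightarrow> real) \<Rightarrow> bool" where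
  "riccati_eq m q r N R \<phi> \<longleftrightarrow>
     (\<forall>i\<in>{1..m}. (\<phi> i)^2 / R i + r * \<phi> i - (\<Sum>j\<in>{1..m}. q i j * \<phi> j) - N i = 0)"

definition psi_eq ::
  "nat \<Rightarrow> (nat \<Rightarrow> nat \<Rightarrow> real) \<Rightarrow> real \<Rightarrow> (nat \<Rightarrow> real) \<Rightarrow> (nat \<Rightarrow> real) \<Rightarrow> (nat \<Rightarrow> real)
    \<Rightarrow> (nat \<Rightarrow> real) \<Rightarrow> (nat \<Rightarrow> real) \<Rightarrow> (nat \<Rightarrow> real) \<Rightarrow> (nat \<Rightarrow> real) \<Rightarrow> bool" where
  "psi_eq m q r N R c h \<theta> \<phi> \<psi> \<longleftrightarrow>
     (\<forall>i\<in>{1..m}. (r + \<phi> i / R i) * \<psi> i - (\<Sum>j\<in>{1..m}. q i j * \<psi> j)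
                  - (h i - \<theta> i) * \<phi> i + N i * c i = 0)"

end

theory Submission
  imports Defs
begin

lemma tarski_box:
  fixes T :: "(nat \<Rightarrow> real) \<Rightarrow> nat \<Rightarrow> real" and M :: "nat set" and lo hi :: real
  assumes lohi: "lo \<le> hi"
    and mono: "\<And>\<phi> \<psi> i. (\<And>j. j\<in>M \<Longrightarrow> lo \<le> \<phi> j \<and> \<phi> j \<le> \<psi> j \<and> \<psi> j \<le> hi) \<Longrightarrow> i\<in>M \<Longrightarrow> T \<phi> i \<le> T \<psi> i"
    and box: "\<And>\<phi> i. (\<And>j. j\<in>M \<Longrightarrow> lo \<le> \<phi> j \<and> \<phi> j \<le> hi) \<Longrightarrow> i\<in>M \<Longrightarrow> lo \<le> T \<phi> i \<and> T \<phi> i \<le> hi"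
  shows "\<exists>\<phi>. \<forall>i\<in>M. lo \<le> \<phi> i \<and> \<phi> i \<le> hi \<and> T \<phi> i = \<phi> i"
proof -
  define S where "S = {\<phi>. \<forall>i\<in>M. lo \<le> \<phi> i \<and> \<phi> i \<le> hi \<and> \<phi> i \<le> T \<phi> i}"
  define p where "p = (\<lambda>i. Sup ((\<lambda>\<phi>. \<phi> i) ` S))"
  have lo_in: "(\<lambda>_. lo) \<in> S" using box[of "\<lambda>_. lo"] lohi by (auto simp: S_def)
  have ne: "(\<lambda>\<phi>. \<phi> i) ` S \<noteq> {}" for i using lo_in by auto
  have bdd: "bdd_above ((\<lambda>\<phi>. \<phi> i) ` S)" if "i\<in>M" for i
    using that by (intro bdd_aboveI[of _ hi]) (auto simp: S_def)
  have up: "\<phi> i \<le> p i" if "\<phi>\<in>S" "i\<in>M" for \<phi> i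
    unfolding p_def by (rule cSup_upper) (use that bdd in auto)
  have p_box: "lo \<le> p i \<and> p i \<le> hi" if "i\<in>M" for i
  proof
    show "lo \<le> p i" using up[OF lo_in that] by simp
    show "p i \<le> hi" unfolding p_def by (rule cSup_least[OF ne]) (use that in \<open>auto simp: S_def\<close>)
  qed
  have pdef: "p i = Sup ((\<lambda>\<phi>. \<phi> i) ` S)" for i by (simp add: p_def)
  have p_le: "p i \<le> T p i" if "i\<in>M" for i
    unfolding pdef[of i]
  proof (rule cSup_least[OF ne])
    fix x assume "x \<in> (\<lambda>\<phi>. \<phi> i) ` S"
    then obtain \<phi> where "\<phi> \<in> S" "x = \<phi> i" by auto
    then have "\<phi> i \<le> T \<phi> i" using that by (auto simp: S_def)
    also have "T \<phi> i \<le> T p i"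
      apply (rule mono[OF _ that])
      using \<open>\<phi> \<in> S\<close> up p_box by (auto simp: S_def)
    finally show "x \<le> T p i" using \<open>x = \<phi> i\<close> by simp
  qed
  have Tp_box: "lo \<le> T p i \<and> T p i \<le> hi" if "i\<in>M" for i
    using box[of p i] p_box that by auto
  have "T p \<in> S"
    unfolding S_def
  proof (intro CollectI ballI conjI)
    fix i assume i: "i\<in>M"
    show "lo \<le> T p i" "T p i \<le> hi" using Tp_box[OF i] by auto
    show "T p i \<le> T (T p) i"
      apply (rule mono[OF _ i])
      using p_box p_le Tp_box by auto
  qed
  then have "T p i \<le> p i" if "i\<in>M" for i using up that by auto
  then show ?thesis using p_box p_le by (intro exI[of _ p]) (auto intro: antisym)
qed

lemma gen_sum:
  assumes "generator_matrix m q" "i \<in> {1..m}"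
  shows "(\<Sum>j\<in>{1..m}. q i j * d j) = (\<Sum>j\<in>{1..m}-{i}. q i j * (d j - d i))"
proof -
  have qi: "q i i = - (\<Sum>j\<in>{1..m}-{i}. q i j)" using assms unfolding generator_matrix_def by auto
  have "(\<Sum>j\<in>{1..m}. q i j * d j) = q i i * d i + (\<Sum>j\<in>{1..m}-{i}. q i j * d j)"
    using assms(2) by (simp add: sum.remove)
  also have "q i i * d i = - (\<Sum>j\<in>{1..m}-{i}. q i j * d i)"
    by (simp add: qi sum_distrib_right)
  finally show ?thesis by (simp add: right_diff_distrib sum_subtractf)
qed

lemma max_principle:
  assumes gen: "generator_matrix m q" and m: "m \<ge> 1"
    and cpos: "\<forall>i\<in>{1..m}. c i > (0::real)"
    and eq: "\<forall>i\<in>{1..m}. c i * d i \<le> (\<Sum>j\<in>{1..m}. q i j * d j)"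
  shows "\<forall>i\<in>{1..m}. d i \<le> 0"
proof -
  let ?M = "{1..m::nat}"
  have fin: "finite (d ` ?M)" and ne: "d ` ?M \<noteq> {}" using m by auto
  obtain k where k: "k \<in> ?M" "d k = Max (d ` ?M)" using Max_in[OF fin ne] by auto
  have kmax: "d j \<le> d k" if "j \<in> ?M" for j using k that fin by auto
  have "(\<Sum>j\<in>?M. q k j * d j) = (\<Sum>j\<in>?M-{k}. q k j * (d j - d k))"
    using gen_sum[OF gen k(1)] .
  also have "\<dots> \<le> 0"
  proof (rule sum_nonpos)
    fix j assume j: "j \<in> ?M - {k}"
    then have "q k j \<ge> 0" using gen k(1) unfolding generator_matrix_def by auto
    moreover have "d j - d k \<le> 0" using kmax j by auto
    ultimately show "q k j * (d j - d k) \<le> 0" by (simp add: mult_nonneg_nonpos)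
  qed
  finally have "c k * d k \<le> 0" using eq k(1) by fastforce
  moreover have "c k > 0" using cpos k(1) by auto
  ultimately have "d k \<le> 0" by (simp add: mult_le_0_iff)
  then show ?thesis using kmax by fastforce
qed

definition qroot :: "real \<Rightarrow> real \<Rightarrow> real \<Rightarrow> real" where
  "qroot a R s = R / 2 * (sqrt (a^2 + 4 * s / R) - a)"

lemma qroot_eq:
  assumes "R > 0" "s \<ge> 0"
  shows "(qroot a R s)^2 / R + a * qroot a R s = s"
proof -
  define S where "S = sqrt (a^2 + 4 * s / R)"
  have S2: "S^2 = a^2 + 4 * s / R" unfolding S_def using assms by (simp add: real_sqrt_pow2)
  have "(qroot a R s)^2 / R + a * qroot a R s = R / 4 * (S^2 - a^2)"
    unfolding qroot_def S_def[symmetric] using assms by (simp add: field_simps power2_eq_square)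
  also have "\<dots> = s" using S2 assms by (simp add: field_simps)
  finally show ?thesis .
qed

lemma qroot_nonneg:
  assumes "R > 0" "s \<ge> 0"
  shows "qroot a R s \<ge> 0"
proof -
  have "sqrt (a^2) \<le> sqrt (a^2 + 4 * s / R)" using assms by (intro real_sqrt_le_mono) simp
  then have "a \<le> sqrt (a^2 + 4 * s / R)" by (metis abs_ge_self order_trans real_sqrt_abs)
  then show ?thesis unfolding qroot_def using assms by simp
qed

lemma qroot_mono:
  assumes "R > 0" "s \<le> s'"
  shows "qroot a R s \<le> qroot a R s'"
proof -
  have "4 * s / R \<le> 4 * s' / R" using assms by (simp add: divide_right_mono)
  then have "sqrt (a^2 + 4 * s / R) \<le> sqrt (a^2 + 4 * s' / R)" by simp
  then show ?thesis unfolding qroot_def using assms by (simp add: mult_left_mono)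
qed

lemma qroot_le:
  assumes "R > 0" "a > 0" "s \<ge> 0" "K \<ge> 0" "s \<le> K^2 / R + a * K"
  shows "qroot a R s \<le> K"
proof (rule ccontr)
  let ?x = "qroot a R s"
  assume "\<not> ?x \<le> K"
  then have xK: "?x > K" by simp
  then have "K^2 < ?x^2" using assms(4) by (simp add: power_strict_mono)
  then have "K^2 / R < ?x^2 / R" using assms(1) by (simp add: divide_strict_right_mono)
  moreover have "a * K < a * ?x" using xK assms(2) by simp
  ultimately have "K^2 / R + a * K < ?x^2 / R + a * ?x" by simp
  also have "\<dots> = s" using qroot_eq assms by simp
  finally show False using assms(5) by simp
qed

lemma qdiag:
  assumes "generator_matrix m q" "i \<in> {1..m}"
  shows "q i i = - (\<Sum>j\<in>{1..m}-{i}. q i j)" "q i i \<le> 0"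
proof -
  show qi: "q i i = - (\<Sum>j\<in>{1..m}-{i}. q i j)" using assms unfolding generator_matrix_def by auto
  have "(\<Sum>j\<in>{1..m}-{i}. q i j) \<ge> 0"
    using assms by (intro sum_nonneg) (auto simp: generator_matrix_def)
  then show "q i i \<le> 0" using qi by simp
qed

lemma sum_split_diag:
  fixes m :: nat
  assumes "i \<in> {1..m}"
  shows "(\<Sum>j\<in>{1..m}. q i j * d j) = q i i * d i + (\<Sum>j\<in>{1..m}-{i}. q i j * (d j::real))"
  using sum.remove[of "{1..m}" i "\<lambda>j. q i j * d j"] assms by simp

lemma off_bounds:
  assumes gen: "generator_matrix m q" and i: "i \<in> {1..m}"
    and b: "\<And>j. j \<in> {1..m} \<Longrightarrow> lo \<le> d j \<and> d j \<le> (hi::real)"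
  shows "(\<Sum>j\<in>{1..m}-{i}. q i j * d j) \<le> - q i i * hi"
    "- q i i * lo \<le> (\<Sum>j\<in>{1..m}-{i}. q i j * d j)"
proof -
  have qn: "q i j \<ge> 0" if "j \<in> {1..m}-{i}" for j using gen i that by (auto simp: generator_matrix_def)
  have "(\<Sum>j\<in>{1..m}-{i}. q i j * d j) \<le> (\<Sum>j\<in>{1..m}-{i}. q i j * hi)"
    using qn b by (intro sum_mono mult_left_mono) auto
  also have "\<dots> = - q i i * hi" using qdiag(1)[OF gen i] by (simp add: sum_distrib_right)
  finally show "(\<Sum>j\<in>{1..m}-{i}. q i j * d j) \<le> - q i i * hi" .
  have "- q i i * lo = (\<Sum>j\<in>{1..m}-{i}. q i j * lo)" using qdiag(1)[OF gen i] by (simp add: sum_distrib_right)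
  also have "\<dots> \<le> (\<Sum>j\<in>{1..m}-{i}. q i j * d j)"
    using qn b by (intro sum_mono mult_left_mono) auto
  finally show "- q i i * lo \<le> (\<Sum>j\<in>{1..m}-{i}. q i j * d j)" .
qed

lemma off_mono:
  assumes gen: "generator_matrix m q" and i: "i \<in> {1..m}"
    and b: "\<And>j. j \<in> {1..m} \<Longrightarrow> d j \<le> (e j::real)"
  shows "(\<Sum>j\<in>{1..m}-{i}. q i j * d j) \<le> (\<Sum>j\<in>{1..m}-{i}. q i j * e j)"
  using gen i b by (intro sum_mono mult_left_mono) (auto simp: generator_matrix_def)

lemma ric_exists:
  assumes gen: "generator_matrix m q" and r: "r > 0"
    and pos: "\<forall>i\<in>{1..m}. N i > 0 \<and> R i > 0"
  shows "\<exists>\<phi>. \<forall>i\<in>{1..m}. \<phi> i \<ge> 0 \<and>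
     (\<phi> i)^2 / R i + r * \<phi> i - (\<Sum>j\<in>{1..m}. q i j * \<phi> j) - N i = 0"
proof -
  let ?M = "{1..m::nat}"
  define K where "K = (\<Sum>i\<in>?M. N i) / r"
  have N0: "\<forall>i\<in>?M. N i \<ge> 0" using pos by (auto intro: less_imp_le)
  have K0: "K \<ge> 0" unfolding K_def using N0 r by (intro divide_nonneg_pos sum_nonneg) auto
  have NK: "N i \<le> r * K" if "i \<in> ?M" for i
  proof -
    have "N i \<le> (\<Sum>i\<in>?M. N i)" using that N0 by (intro member_le_sum) auto
    then show ?thesis unfolding K_def using r by simp
  qed
  define T where "T = (\<lambda>\<phi> i. qroot (r - q i i) (R i) (N i + (\<Sum>j\<in>?M-{i}. q i j * \<phi> j)))"
  have sn: "N i + (\<Sum>j\<in>?M-{i}. q i j * \<phi> j) \<ge> 0" if "i \<in> ?M" "\<And>j. j \<in> ?M \<Longrightarrow> 0 \<le> \<phi> j \<and> \<phi> j \<le> K" for \<phi> i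
    using off_bounds(2)[OF gen that(1), of 0 \<phi> K] that pos by force
  have "\<exists>\<phi>. \<forall>i\<in>?M. 0 \<le> \<phi> i \<and> \<phi> i \<le> K \<and> T \<phi> i = \<phi> i"
  proof (rule tarski_box[OF K0])
    fix \<phi> \<psi> :: "nat \<Rightarrow> real" and i
    assume h: "\<And>j. j \<in> ?M \<Longrightarrow> 0 \<le> \<phi> j \<and> \<phi> j \<le> \<psi> j \<and> \<psi> j \<le> K" and i: "i \<in> ?M"
    show "T \<phi> i \<le> T \<psi> i" unfolding T_def
      using pos i off_mono[OF gen i, of \<phi> \<psi>] h by (intro qroot_mono) auto
  next
    fix \<phi> :: "nat \<Rightarrow> real" and i
    assume h: "\<And>j. j \<in> ?M \<Longrightarrow> 0 \<le> \<phi> j \<and> \<phi> j \<le> K" and i: "i \<in> ?M"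
    have s0: "N i + (\<Sum>j\<in>?M-{i}. q i j * \<phi> j) \<ge> 0" by (rule sn[OF i]) (use h in auto)
    have Ri: "R i > 0" using pos i by auto
    have a: "r - q i i > 0" using qdiag(2)[OF gen i] r by simp
    have "N i + (\<Sum>j\<in>?M-{i}. q i j * \<phi> j) \<le> r * K + - q i i * K"
      using off_bounds(1)[OF gen i, of 0 \<phi> K] h NK[OF i] by force
    also have "\<dots> \<le> K^2 / R i + (r - q i i) * K" using Ri by (simp add: algebra_simps)
    finally have "T \<phi> i \<le> K" unfolding T_def using Ri a s0 K0 by (intro qroot_le) auto
    moreover have "0 \<le> T \<phi> i" unfolding T_def using Ri s0 by (intro qroot_nonneg) auto
    ultimately show "0 \<le> T \<phi> i \<and> T \<phi> i \<le> K" by simp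
  qed
  then obtain \<phi> where \<phi>: "\<forall>i\<in>?M. 0 \<le> \<phi> i \<and> \<phi> i \<le> K \<and> T \<phi> i = \<phi> i" by blast
  show ?thesis
  proof (intro exI[of _ \<phi>] ballI conjI)
    fix i assume i: "i \<in> ?M"
    show "\<phi> i \<ge> 0" using \<phi> i by auto
    have s0: "N i + (\<Sum>j\<in>?M-{i}. q i j * \<phi> j) \<ge> 0" by (rule sn[OF i]) (use \<phi> in auto)
    have Ri: "R i > 0" using pos i by auto
    have "(\<phi> i)^2 / R i + (r - q i i) * \<phi> i = N i + (\<Sum>j\<in>?M-{i}. q i j * \<phi> j)"
      using qroot_eq[OF Ri s0, of "r - q i i"] \<phi> i unfolding T_def by auto
    then show "(\<phi> i)^2 / R i + r * \<phi> i - (\<Sum>j\<in>?M. q i j * \<phi> j) - N i = 0"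
      using sum_split_diag[OF i, of q \<phi>] by (simp add: algebra_simps)
  qed
qed

lemma psi_exists:
  assumes gen: "generator_matrix m q" and r: "r > 0"
    and e: "\<forall>i\<in>{1..m}. e i \<ge> r"
  shows "\<exists>\<psi>. \<forall>i\<in>{1..m}. e i * \<psi> i - (\<Sum>j\<in>{1..m}. q i j * \<psi> j) - b i = 0"
proof -
  let ?M = "{1..m::nat}"
  define K where "K = (\<Sum>i\<in>?M. \<bar>b i\<bar>) / r"
  have K0: "K \<ge> 0" unfolding K_def using r by (intro divide_nonneg_pos sum_nonneg) auto
  have bK: "\<bar>b i\<bar> \<le> e i * K" if "i \<in> ?M" for i
  proof -
    have "\<bar>b i\<bar> \<le> (\<Sum>i\<in>?M. \<bar>b i\<bar>)" using that by (intro member_le_sum) auto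
    then have "\<bar>b i\<bar> \<le> r * K" unfolding K_def using r by simp
    also have "\<dots> \<le> e i * K" using e that K0 by (simp add: mult_right_mono)
    finally show ?thesis .
  qed
  define T where "T = (\<lambda>\<psi> i. ((\<Sum>j\<in>?M-{i}. q i j * \<psi> j) + b i) / (e i - q i i))"
  have D: "e i - q i i > 0" if "i \<in> ?M" for i using qdiag(2)[OF gen that] e that r by force
  have "\<exists>\<psi>. \<forall>i\<in>?M. -K \<le> \<psi> i \<and> \<psi> i \<le> K \<and> T \<psi> i = \<psi> i"
  proof (rule tarski_box)
    show "-K \<le> K" using K0 by simp
  next
    fix \<phi> \<psi> :: "nat \<Rightarrow> real" and i
    assume h: "\<And>j. j \<in> ?M \<Longrightarrow> -K \<le> \<phi> j \<and> \<phi> j \<le> \<psi> j \<and> \<psi> j \<le> K" and i: "i \<in> ?M"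
    show "T \<phi> i \<le> T \<psi> i" unfolding T_def
      using D[OF i] off_mono[OF gen i, of \<phi> \<psi>] h by (intro divide_right_mono) auto
  next
    fix \<phi> :: "nat \<Rightarrow> real" and i
    assume h: "\<And>j. j \<in> ?M \<Longrightarrow> -K \<le> \<phi> j \<and> \<phi> j \<le> K" and i: "i \<in> ?M"
    have u: "(\<Sum>j\<in>?M-{i}. q i j * \<phi> j) \<le> - q i i * K"
      by (rule off_bounds(1)[OF gen i]) (use h in auto)
    have l: "- q i i * (-K) \<le> (\<Sum>j\<in>?M-{i}. q i j * \<phi> j)"
      by (rule off_bounds(2)[OF gen i]) (use h in auto)
    have "(\<Sum>j\<in>?M-{i}. q i j * \<phi> j) + b i \<le> K * (e i - q i i)"
      using u bK[OF i] by (simp add: algebra_simps)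
    then have 1: "T \<phi> i \<le> K" unfolding T_def using D[OF i] by (simp add: pos_divide_le_eq)
    have "-K * (e i - q i i) \<le> (\<Sum>j\<in>?M-{i}. q i j * \<phi> j) + b i"
      using l bK[OF i] by (simp add: algebra_simps)
    then have 2: "-K \<le> T \<phi> i" unfolding T_def using D[OF i] by (simp add: pos_le_divide_eq)
    show "-K \<le> T \<phi> i \<and> T \<phi> i \<le> K" using 1 2 by simp
  qed
  then obtain \<psi> where \<psi>: "\<forall>i\<in>?M. T \<psi> i = \<psi> i" by blast
  show ?thesis
  proof (intro exI[of _ \<psi>] ballI)
    fix i assume i: "i \<in> ?M"
    have "(e i - q i i) * \<psi> i = (\<Sum>j\<in>?M-{i}. q i j * \<psi> j) + b i"
    proof -
      have "\<psi> i = ((\<Sum>j\<in>?M-{i}. q i j * \<psi> j) + b i) / (e i - q i i)"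
        using \<psi> i unfolding T_def by auto
      then show ?thesis using D[OF i] by (simp add: field_simps)
    qed
    then show "e i * \<psi> i - (\<Sum>j\<in>?M. q i j * \<psi> j) - b i = 0"
      using sum_split_diag[OF i, of q \<psi>] by (simp add: algebra_simps)
  qed
qed

lemma lin_unique:
  assumes gen: "generator_matrix m q" and m: "m \<ge> 1"
    and cpos: "\<forall>i\<in>{1..m}. c i > (0::real)"
    and x: "\<forall>i\<in>{1..m}. c i * x i - (\<Sum>j\<in>{1..m}. q i j * x j) = f i"
    and y: "\<forall>i\<in>{1..m}. c i * y i - (\<Sum>j\<in>{1..m}. q i j * y j) = f i"
  shows "\<forall>i\<in>{1..m}. x i = y i"
proof -
  have sd: "(\<Sum>j\<in>{1..m}. q i j * (u j - v j)) = (\<Sum>j\<in>{1..m}. q i j * u j) - (\<Sum>j\<in>{1..m}. q i j * v j)"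
    for i and u v :: "nat \<Rightarrow> real"
    by (simp add: right_diff_distrib sum_subtractf)
  have 1: "\<forall>i\<in>{1..m}. x i - y i \<le> 0"
  proof (rule max_principle[OF gen m cpos], intro ballI)
    fix i assume i: "i \<in> {1..m}"
    show "c i * (x i - y i) \<le> (\<Sum>j\<in>{1..m}. q i j * (x j - y j))"
    proof -
      have "c i * x i - (\<Sum>j\<in>{1..m}. q i j * x j) = c i * y i - (\<Sum>j\<in>{1..m}. q i j * y j)"
        using x y i by auto
      then show ?thesis unfolding sd by (simp add: right_diff_distrib)
    qed
  qed
  have 2: "\<forall>i\<in>{1..m}. y i - x i \<le> 0"
  proof (rule max_principle[OF gen m cpos], intro ballI)
    fix i assume i: "i \<in> {1..m}"
    show "c i * (y i - x i) \<le> (\<Sum>j\<in>{1..m}. q i j * (y j - x j))"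
    proof -
      have "c i * x i - (\<Sum>j\<in>{1..m}. q i j * x j) = c i * y i - (\<Sum>j\<in>{1..m}. q i j * y j)"
        using x y i by auto
      then show ?thesis unfolding sd by (simp add: right_diff_distrib)
    qed
  qed
  show ?thesis using 1 2 by force
qed

theorem lemma5p1:
  fixes m :: nat and q :: "nat \<Rightarrow> nat \<Rightarrow> real" and r :: real
    and N R c h \<theta> :: "nat \<Rightarrow> real"
  assumes "m \<ge> 1"
    and "generator_matrix m q"
    and "r > 0"
    and "\<forall>i\<in>{1..m}. N i > 0 \<and> R i > 0 \<and> c i > 0 \<and> h i > 0"
  shows "(\<exists>!\<phi>. \<phi> \<in> extensional {1..m} \<and> (\<forall>i\<in>{1..m}. \<phi> i \<ge> 0) \<and> riccati_eq m q r N R \<phi>) \<and>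
         (\<forall>\<phi>. \<phi> \<in> extensional {1..m} \<and> (\<forall>i\<in>{1..m}. \<phi> i \<ge> 0) \<and> riccati_eq m q r N R \<phi> \<longrightarrow>
           (\<exists>!\<psi>. \<psi> \<in> extensional {1..m} \<and> psi_eq m q r N R c h \<theta> \<phi> \<psi>))"
proof
  let ?M = "{1..m::nat}"
  note m = assms(1) and gen = assms(2) and r = assms(3) and pos = assms(4)
  have restr_sum: "(\<Sum>j\<in>?M. q i j * restrict f ?M j) = (\<Sum>j\<in>?M. q i j * f j)" for i and f :: "nat \<Rightarrow> real"
    by (rule sum.cong) auto
  show "\<exists>!\<phi>. \<phi> \<in> extensional ?M \<and> (\<forall>i\<in>?M. \<phi> i \<ge> 0) \<and> riccati_eq m q r N R \<phi>"
  proof (rule ex_ex1I)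
    obtain \<phi>0 where \<phi>0: "\<forall>i\<in>?M. \<phi>0 i \<ge> 0 \<and>
       (\<phi>0 i)^2 / R i + r * \<phi>0 i - (\<Sum>j\<in>?M. q i j * \<phi>0 j) - N i = 0"
      using ric_exists[OF gen r] pos by blast
    show "\<exists>\<phi>. \<phi> \<in> extensional ?M \<and> (\<forall>i\<in>?M. \<phi> i \<ge> 0) \<and> riccati_eq m q r N R \<phi>"
      using \<phi>0 by (intro exI[of _ "restrict \<phi>0 ?M"]) (auto simp: riccati_eq_def restr_sum)
  next
    fix \<phi> \<chi>
    assume a: "\<phi> \<in> extensional ?M \<and> (\<forall>i\<in>?M. \<phi> i \<ge> 0) \<and> riccati_eq m q r N R \<phi>"
       and b: "\<chi> \<in> extensional ?M \<and> (\<forall>i\<in>?M. \<chi> i \<ge> 0) \<and> riccati_eq m q r N R \<chi>"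
    let ?c = "\<lambda>i. r + (\<phi> i + \<chi> i) / R i"
    let ?f = "\<lambda>i. N i + \<phi> i * \<chi> i / R i"
    have cpos: "\<forall>i\<in>?M. ?c i > 0" using a b pos r by (auto intro!: add_pos_nonneg)
    have x: "\<forall>i\<in>?M. ?c i * \<phi> i - (\<Sum>j\<in>?M. q i j * \<phi> j) = ?f i"
    proof
      fix i assume i: "i \<in> ?M"
      have "(\<phi> i)^2 / R i + r * \<phi> i - (\<Sum>j\<in>?M. q i j * \<phi> j) - N i = 0"
        using a i unfolding riccati_eq_def by blast
      then show "?c i * \<phi> i - (\<Sum>j\<in>?M. q i j * \<phi> j) = ?f i"
        using pos i by (simp add: add_divide_distrib distrib_right power2_eq_square algebra_simps)
    qed
    have y: "\<forall>i\<in>?M. ?c i * \<chi> i - (\<Sum>j\<in>?M. q i j * \<chi> j) = ?f i"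
    proof
      fix i assume i: "i \<in> ?M"
      have "(\<chi> i)^2 / R i + r * \<chi> i - (\<Sum>j\<in>?M. q i j * \<chi> j) - N i = 0"
        using b i unfolding riccati_eq_def by blast
      then show "?c i * \<chi> i - (\<Sum>j\<in>?M. q i j * \<chi> j) = ?f i"
        using pos i by (simp add: add_divide_distrib distrib_right power2_eq_square algebra_simps)
    qed
    have "\<forall>i\<in>?M. \<phi> i = \<chi> i" by (rule lin_unique[OF gen m cpos x y])
    then show "\<phi> = \<chi>" using a b by (intro extensionalityI[of _ ?M]) auto
  qed
next
  let ?M = "{1..m::nat}"
  note m = assms(1) and gen = assms(2) and r = assms(3) and pos = assms(4)
  have restr_sum: "(\<Sum>j\<in>?M. q i j * restrict f ?M j) = (\<Sum>j\<in>?M. q i j * f j)" for i and f :: "nat \<Rightarrow> real"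
    by (rule sum.cong) auto
  show "\<forall>\<phi>. \<phi> \<in> extensional ?M \<and> (\<forall>i\<in>?M. \<phi> i \<ge> 0) \<and> riccati_eq m q r N R \<phi> \<longrightarrow>
           (\<exists>!\<psi>. \<psi> \<in> extensional ?M \<and> psi_eq m q r N R c h \<theta> \<phi> \<psi>)"
  proof (intro allI impI)
    fix \<phi> assume a: "\<phi> \<in> extensional ?M \<and> (\<forall>i\<in>?M. \<phi> i \<ge> 0) \<and> riccati_eq m q r N R \<phi>"
    let ?e = "\<lambda>i. r + \<phi> i / R i"
    let ?b = "\<lambda>i. (h i - \<theta> i) * \<phi> i - N i * c i"
    have ege: "\<forall>i\<in>?M. ?e i \<ge> r" using a pos by auto
    have cpos: "\<forall>i\<in>?M. ?e i > 0" using ege r by force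
    have peq: "psi_eq m q r N R c h \<theta> \<phi> \<psi> \<longleftrightarrow>
       (\<forall>i\<in>?M. ?e i * \<psi> i - (\<Sum>j\<in>?M. q i j * \<psi> j) - ?b i = 0)" for \<psi>
      unfolding psi_eq_def by (simp add: algebra_simps)
    show "\<exists>!\<psi>. \<psi> \<in> extensional ?M \<and> psi_eq m q r N R c h \<theta> \<phi> \<psi>"
    proof (rule ex_ex1I)
      obtain \<psi>0 where \<psi>0: "\<forall>i\<in>?M. ?e i * \<psi>0 i - (\<Sum>j\<in>?M. q i j * \<psi>0 j) - ?b i = 0"
        using psi_exists[OF gen r ege, of ?b] by blast
      show "\<exists>\<psi>. \<psi> \<in> extensional ?M \<and> psi_eq m q r N R c h \<theta> \<phi> \<psi>"
        using \<psi>0 by (intro exI[of _ "restrict \<psi>0 ?M"]) (simp add: peq restr_sum)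
    next
      fix x y
      assume x: "x \<in> extensional ?M \<and> psi_eq m q r N R c h \<theta> \<phi> x"
        and y: "y \<in> extensional ?M \<and> psi_eq m q r N R c h \<theta> \<phi> y"
      have "\<forall>i\<in>?M. x i = y i"
        by (rule lin_unique[OF gen m cpos, of x ?b y]) (use x y in \<open>auto simp: peq\<close>)
      then show "x = y" using x y by (intro extensionalityI[of _ ?M]) auto
    qed
  qed
qed

end
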